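(* Let $m>n$ be integers, $\Lambda=I_m$, $\theta_*\in\mathbb{R}^m$, $\sigma^2\ge0$. Define the deterministic equivalents for the min-norm random features interpolator as follows. If $p>n$ (over-parameterized), with $\lambda_n$ solving $\operatorname{Tr}(\Lambda(\Lambda+\lambda_nI)^{-1})=n$: $\mathsf{B}_{\mathsf{N},0}=\frac{p\langle\theta_*,(\Lambda+\lambda_nI)^{-1}\theta_*\rangle}{p-n}$, $\mathsf{V}_{\mathsf{N},0}=\frac{\sigma^2p}{\lambda_n(p-n)}$, $\mathsf{B}_{\mathsf{R},0}=\frac{n\lambda_n^2\langle\theta_*,(\Lambda+\lambda_nI)^{-2}\theta_*\rangle}{n-\operatorname{Tr}(\Lambda^2(\Lambda+\lambda_nI)^{-2})}+\frac{n\lambda_n\langle\theta_*,(\Lambda+\lambda_nI)^{-1}\theta_*\rangle}{p-n}$, $\mathsf{V}_{\mathsf{R},0}=\frac{\sigma^2\operatorname{Tr}(\Lambda^2(\Lambda+\lambda_nI)^{-2})}{n-\operatorname{Tr}(\Lambda^2(\Lambda+\lambda_nI)^{-2})}+\frac{\sigma^2n}{p-n}$. If $p<n$ (under-parameterized), with $\lambda_p$ solving $\operatorname{Tr}(\Lambda(\Lambda+\lambda_pI)^{-1})=p$: $\mathsf{B}_{\mathsf{N},0}=\frac{p\langle\theta_*,\Lambda(\Lambda+\lambda_pI)^{-2}\theta_*\rangle}{n-\operatorname{Tr}(\Lambda^2(\Lambda+\lambda_pI)^{-2})}+\frac{p\langle\theta_*,(\Lambda+\lambda_pI)^{-1}\theta_*\rangle}{n-p}$,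 $\mathsf{V}_{\mathsf{N},0}=\frac{\sigma^2p}{\lambda_p(n-p)}$, $\mathsf{B}_{\mathsf{R},0}=\frac{n\lambda_p\langle\theta_*,(\Lambda+\lambda_pI)^{-1}\theta_*\rangle}{n-p}$, $\mathsf{V}_{\mathsf{R},0}=\frac{\sigma^2p}{n-p}$. Let $\mathsf{R}_0=\mathsf{B}_{\mathsf{R},0}+\mathsf{V}_{\mathsf{R},0}$ and $\mathsf{N}_0=\mathsf{B}_{\mathsf{N},0}+\mathsf{V}_{\mathsf{N},0}$. Then in the over-parameterized regime $p>n$, $$\mathsf{R}_0=\frac{m-n}{n}\mathsf{N}_0+\frac{2n-m}{m-n}\sigma^2,$$ and in the under-parameterized regime $p<n$, $$\big(\mathsf{V}_{\mathsf{R},0}\big)^2=\frac{m-n}{n}\mathsf{V}_{\mathsf{R},0}\mathsf{V}_{\mathsf{N},0}+\frac{m\sigma^2}{n}\mathsf{V}_{\mathsf{N},0},$$ $$(m-n)\mathsf{B}_{\mathsf{N},0}\big(m\mathsf{B}_{\mathsf{R},0}-n\|\theta_*\|_2^2\big)\big(m\mathsf{B}_{\mathsf{R},0}^2-n\|\theta_*\|_2^4\big)=nm\big(\mathsf{B}_{\mathsf{R},0}-\|\theta_*\|_2^2\big)^2\big[m\mathsf{B}_{\mathsf{R},0}^2+n\|\theta_*\|_2^2\mathsf{B}_{\mathsf{R},0}-2n\|\theta_*\|_2^4\big].$$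
   Context: These quantities are the deterministic equivalents of the bias/variance of the excess risk ($\mathsf{B}_{\mathsf{R},0},\mathsf{V}_{\mathsf{R},0}$) and of the squared $\ell_2$ norm ($\mathsf{B}_{\mathsf{N},0},\mathsf{V}_{\mathsf{N},0}$) of the minimum-norm random features interpolator with $n$ samples and $p$ features, feature spectrum $\Lambda$, target coefficients $\theta_*$ and noise variance $\sigma^2$; they are defined directly by the formulas in the claim, here with isotropic finite-rank spectrum $\Lambda=I_m$. *)

theory Defs
  imports "HOL-Analysis.Analysis"
begin

definition resolv :: "real^'m^'m \<Rightarrow> real \<Rightarrow> real^'m^'m" where
  "resolv L l = matrix_inv (L + mat l)"

definition lam_eff :: "real^'m^'m \<Rightarrow> nat \<Rightarrow> real" where
  "lam_eff L k = (THE l. l > 0 \<and> trace (L ** resolv L l) = real k)"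

definition df2 :: "real^'m^'m \<Rightarrow> real \<Rightarrow> real" where
  "df2 L l = trace (L ** L ** resolv L l ** resolv L l)"

definition BN0 :: "real^'m^'m \<Rightarrow> real^'m \<Rightarrow> nat \<Rightarrow> nat \<Rightarrow> real" where
  "BN0 L th n p =
    (if p > n then
       (let l = lam_eff L n in
         real p * (th \<bullet> (resolv L l *v th)) / (real p - real n))
     else
       (let l = lam_eff L p in
         real p * (th \<bullet> ((L ** resolv L l ** resolv L l) *v th)) / (real n - df2 L l)
         + real p * (th \<bullet> (resolv L l *v th)) / (real n - real p)))"

definition VN0 :: "real^'m^'m \<Rightarrow> real \<Rightarrow> nat \<Rightarrow> nat \<Rightarrow> real" where
  "VN0 L s2 n p =
    (if p > n then s2 * real p / (lam_eff L n * (real p - real n))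
     else s2 * real p / (lam_eff L p * (real n - real p)))"

definition BR0 :: "real^'m^'m \<Rightarrow> real^'m \<Rightarrow> nat \<Rightarrow> nat \<Rightarrow> real" where
  "BR0 L th n p =
    (if p > n then
       (let l = lam_eff L n in
         real n * l^2 * (th \<bullet> ((resolv L l ** resolv L l) *v th)) / (real n - df2 L l)
         + real n * l * (th \<bullet> (resolv L l *v th)) / (real p - real n))
     else
       (let l = lam_eff L p in
         real n * l * (th \<bullet> (resolv L l *v th)) / (real n - real p)))"

definition VR0 :: "real^'m^'m \<Rightarrow> real \<Rightarrow> nat \<Rightarrow> nat \<Rightarrow> real" where
  "VR0 L s2 n p =
    (if p > n then
       s2 * df2 L (lam_eff L n) / (real n - df2 L (lam_eff L n)) + s2 * real n / (real p - real n)
     else s2 * real p / (real n - real p))"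

definition R0 :: "real^'m^'m \<Rightarrow> real^'m \<Rightarrow> real \<Rightarrow> nat \<Rightarrow> nat \<Rightarrow> real" where
  "R0 L th s2 n p = BR0 L th n p + VR0 L s2 n p"

definition N0 :: "real^'m^'m \<Rightarrow> real^'m \<Rightarrow> real \<Rightarrow> nat \<Rightarrow> nat \<Rightarrow> real" where
  "N0 L th s2 n p = BN0 L th n p + VN0 L s2 n p"

end

theory Submission imports Defs begin
lemma if0_mult: "(if P then (a::real) else 0) * y = (if P then a*y else 0)" by simp
lemma mat_add: "mat a + mat b = (mat (a+b) :: real^'m^'m)"
  by (simp add: vec_eq_iff mat_def)
lemma mat_mul: "mat a ** mat b = (mat (a*b) :: real^'m^'m)"
  by (simp add: vec_eq_iff mat_def matrix_matrix_mult_def if0_mult)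
lemma mat_inv: assumes "a \<noteq> 0" shows "matrix_inv (mat a :: real^'m^'m) = mat (1/a)"
proof -
  have "mat a ** mat (1/a) = (mat 1::real^'m^'m)" "mat (1/a) ** mat a = (mat 1::real^'m^'m)"
    using assms by (simp_all add: mat_mul)
  then show ?thesis unfolding matrix_inv_def
    by (smt (verit, ccfv_threshold) matrix_mul_assoc matrix_mul_lid matrix_mul_rid someI)
qed
lemma trace_mat: "trace (mat a :: real^'m^'m) = a * CARD('m)"
  by (simp add: trace_def mat_def)
lemma mat_vec: "(mat a :: real^'m^'m) *v x = a *s x"
  by (simp add: vec_eq_iff mat_def matrix_vector_mult_def if0_mult)
lemma inner_th: "(th::real^'m) \<bullet> (a *s th) = a * (norm th)^2"
  by (simp add: power2_norm_eq_inner scalar_mult_eq_scaleR)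
lemma resolv_I: "l > -1 \<Longrightarrow> resolv (mat 1 :: real^'m^'m) l = mat (1/(1+l))"
  unfolding resolv_def mat_add by (rule mat_inv) simp
lemma lam_I: assumes "0 < k" "k < CARD('m)"
  shows "lam_eff (mat 1 :: real^'m^'m) k = real CARD('m) / k - 1"
  unfolding lam_eff_def
proof (rule the_equality)
  have "real CARD('m) / k > 1" using assms by (simp add: field_simps)
  then show "real CARD('m) / k - 1 > 0 \<and> trace ((mat 1 :: real^'m^'m) ** resolv (mat 1) (real CARD('m) / k - 1)) = k"
    using assms by (simp add: resolv_I mat_mul trace_mat)
next
  fix l assume "0 < l \<and> trace ((mat 1 :: real^'m^'m) ** resolv (mat 1) l) = k"
  then have "0 < l" "trace ((mat 1 :: real^'m^'m) ** resolv (mat 1) l) = k" by simp_all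
  then have "0 < l" "CARD('m) / (1+l) = k" by (simp_all add: resolv_I mat_mul trace_mat)
  then show "l = real CARD('m) / k - 1" using assms by (simp add: field_simps)
qed
lemma under_alg:
  fixes M n p t :: real
  assumes pn: "p < n" and Mn: "n < M" and p0: "0 < p"
  and BN: "bn = p^3*t/(M*(n*M-p^2)) + p^2*t/(M*(n-p))"
  and BR: "br = n*(M-p)*t/(M*(n-p))"
  shows "(M - n) * bn * (M * br - n * t) * (M * br^2 - n * t^2)
       = n * M * (br - t)^2 * (M * br^2 + n * t * br - 2 * n * t^2)"
proof -
  define D where "D = n - p"
  define E where "E = n*M - p^2"
  define A where "A = n^2*(M-p)^2 - n*M*D^2"
  define B where "B = n^2*(M-p)^2 + n^2*(M-p)*D - 2*n*M*D^2"
  define C where "C = p*n - 2*p^2 + n*M"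
  have D0: "D > 0" using pn by (simp add: D_def)
  have M0: "M > 0" using Mn pn p0 by linarith
  have "p * p < n * M" by (rule mult_strict_mono) (use pn Mn p0 in auto)
  then have E0: "E > 0" unfolding E_def by (simp add: power2_eq_square)
  have P: "C*A = E*B" unfolding A_def B_def C_def D_def E_def
    by (simp add: algebra_simps power2_eq_square)
  have b: "bn = t * (p^2 * C / (M*E*D))" unfolding BN C_def E_def[symmetric] D_def[symmetric]
    using D0 M0 E0 by (simp add: field_simps power2_eq_square power3_eq_cube) (simp add: D_def E_def algebra_simps power2_eq_square)
  have r1: "M * br - n * t = t * (n*(M-n)/D)" unfolding BR D_def[symmetric]
    using D0 M0 by (simp add: field_simps) (simp add: D_def algebra_simps)
  have r2: "br - t = t * (p*(M-n)/(M*D))" unfolding BR D_def[symmetric]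
    using D0 M0 by (simp add: field_simps) (simp add: D_def algebra_simps)
  have r3: "M * br^2 - n * t^2 = t^2 * (A/(M*D^2))" unfolding BR D_def[symmetric] A_def
    using D0 M0 by (simp add: field_simps power2_eq_square)
  have r4: "M * br^2 + n * t * br - 2 * n * t^2 = t^2 * (B/(M*D^2))" unfolding BR D_def[symmetric] B_def
    using D0 M0 by (simp add: field_simps power2_eq_square)
  have L: "(M - n) * (t * (p^2 * C / (M*E*D))) * (t * (n*(M-n)/D)) * (t^2 * (A/(M*D^2)))
     = t^4 * p^2 * n * (M-n)^2 * (C*A) / (M^2 * E * D^4)"
    using D0 M0 E0 by (simp add: field_simps power2_eq_square) (simp add: power4_eq_xxxx power2_eq_square)
  have R: "n * M * (t * (p*(M-n)/(M*D)))^2 * (t^2 * (B/(M*D^2))) = t^4 * p^2 * n * (M-n)^2 * (E*B) / (M^2 * E * D^4)"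
    using D0 M0 E0 by (simp add: field_simps power2_eq_square) (simp add: power4_eq_xxxx power2_eq_square)
  show ?thesis unfolding b r1 r2 r3 r4 L R P ..
qed

lemma under_var:
  fixes M n p D s :: real
  assumes "D = n - p" "D \<noteq> 0" "M - p \<noteq> 0" "n \<noteq> 0"
  shows "(s * p/D)^2 = (M - n)/n * (s * p/D) * (s * p^2/((M-p)*D)) + M * s / n * (s * p^2/((M-p)*D))"
proof -
  have e: "(M - n)/n * (s * p/D) + M * s / n = s * (M - p) / D"
  proof -
    have "(M - n)/n * (s * p/D) + M * s / n = s * ((M-n)*p + M*D) / (n*D)"
      using assms(2-4) by (simp add: field_simps)
    also have "(M-n)*p + M*D = n*(M-p)" unfolding assms(1) by (simp add: algebra_simps)
    finally show ?thesis using assms(2-4) by (simp add: field_simps)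
  qed
  have "(M - n)/n * (s * p/D) * (s * p^2/((M-p)*D)) + M * s / n * (s * p^2/((M-p)*D))
      = ((M - n)/n * (s * p/D) + M * s / n) * (s * p^2/((M-p)*D))" by (simp add: algebra_simps)
  also have "\<dots> = (s * p/D)^2" unfolding e using assms(2-4) by (simp add: field_simps power2_eq_square)
  finally show ?thesis ..
qed

theorem corollary7:
  fixes th :: "real^'m" and s2 :: real and n p :: nat
  defines "L \<equiv> (mat 1 :: real^'m^'m)"
  defines "m \<equiv> CARD('m)"
  assumes "m > n" and "n > 0" and "p > 0" and "s2 \<ge> 0"
  shows "(p > n \<longrightarrow>
            R0 L th s2 n p = (real m - real n) / real n * N0 L th s2 n p
                             + (2 * real n - real m) / (real m - real n) * s2)
       \<and> (p < n \<longrightarrow>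
            (VR0 L s2 n p)^2 = (real m - real n) / real n * VR0 L s2 n p * VN0 L s2 n p
                               + real m * s2 / real n * VN0 L s2 n p
          \<and> (real m - real n) * BN0 L th n p * (real m * BR0 L th n p - real n * (norm th)^2)
               * (real m * (BR0 L th n p)^2 - real n * (norm th)^4)
            = real n * real m * (BR0 L th n p - (norm th)^2)^2
               * (real m * (BR0 L th n p)^2 + real n * (norm th)^2 * BR0 L th n p
                  - 2 * real n * (norm th)^4))"
  proof -
  have mL: "m = CARD('m)" by (simp add: m_def)
  define M where "M = real m"
  define t where "t = (norm th)^2"
  have n4: "(norm th)^4 = t^2" by (simp add: t_def flip: power_mult)
  have t0: "t \<ge> 0" by (simp add: t_def)
  have Mn: "M > n" using assms(3) by (simp add: M_def)
  have np: "n > 0" "p > 0" using assms by auto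
  show ?thesis
  proof (intro conjI impI)
    assume pn: "p > n"
    have lam: "lam_eff L n = M / n - 1" unfolding L_def M_def m_def
      by (rule lam_I) (use assms(3,4) in \<open>auto simp: m_def\<close>)
    have lpos: "M / n - 1 > 0" using Mn np by (simp add: field_simps)
    have res: "resolv L (M/n - 1) = mat (n/M)" unfolding L_def
      using lpos np Mn by (subst resolv_I) (auto simp: field_simps)
    have df: "df2 L (M/n-1) = n^2/M" unfolding df2_def res
      using Mn np by (simp add: L_def mat_mul trace_mat m_def[symmetric] M_def[symmetric] power2_eq_square field_simps)
    have BN: "BN0 L th n p = p * (n/M) * t / (real p - n)"
      using pn by (simp add: Let_def BN0_def lam res mat_vec inner_th t_def)
    have VN: "VN0 L s2 n p = s2 * p / ((M/n - 1) * (real p - n))"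
      using pn by (simp add: VN0_def lam)
    have BR: "BR0 L th n p = n * (M/n-1)^2 * ((n/M)^2*t) / (n - n^2/M) + n * (M/n-1) * ((n/M) * t) / (real p - n)"
      using pn by (simp add: Let_def BR0_def lam res df mat_vec inner_th t_def mat_mul power2_eq_square)
    have VR: "VR0 L s2 n p = s2 * (n^2/M) / (n - n^2/M) + s2 * n / (real p - n)"
      using pn by (simp add: VR0_def lam df)
    have d1: "real p - n \<noteq> 0" "M - n \<noteq> 0" "M \<noteq> 0" "real n \<noteq> 0" using pn Mn np by auto
    have e1: "real n - n^2/M = n * (M - n) / M" using d1 by (simp add: field_simps power2_eq_square)
    have e3: "M/n - 1 = (M-n)/n" using d1 by (simp add: field_simps)
    have f1: "n * ((M-n)/n)^2 * ((n/M)^2*t) / (n * (M - n) / M) = (M-n)*t/M"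
      using d1 by (simp add: field_simps power2_eq_square)
    have f2: "n * ((M-n)/n) * ((n/M) * t) / (real p - n) = n*(M-n)*t/(M*(real p-n))"
      using d1 by (simp add: field_simps)
    have f3: "(M-n)*t/M + n*(M-n)*t/(M*(real p-n)) = (M-n)/M * t * p/(real p-n)"
      using d1 by (simp add: field_simps)
    have BR': "BR0 L th n p = (M-n)/M * t * p/(real p-n)" unfolding BR e1 e3 f1 f2 f3 ..
    have e2: "s2 * (n^2/M) / (n * (M - n) / M) = s2*n/(M-n)" using d1 by (simp add: field_simps power2_eq_square)
    have VR': "VR0 L s2 n p = s2*n/(M-n) + s2*n/(real p-n)" unfolding VR e1 e2 by simp
    have VN': "VN0 L s2 n p = s2*p*n/((M-n)*(real p-n))" unfolding VN using d1
      by (simp add: field_simps)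
    show "R0 L th s2 n p = (real m - real n) / real n * N0 L th s2 n p
                             + (2 * real n - real m) / (real m - real n) * s2"
    proof -
      have g1: "(M-n)/n * (p * (n/M) * t / (real p - n)) = (M-n)/M * t * p/(real p-n)"
        using d1 by (simp add: field_simps)
      have gg: "a \<noteq> 0 \<Longrightarrow> q \<noteq> 0 \<Longrightarrow> b \<noteq> 0 \<Longrightarrow> a/b * (s*r*b/(a*q)) = s*r/(q::real)" for a b q s r
        by (simp add: field_simps)
      have g2: "(M-n)/n * (s2*p*n/((M-n)*(real p-n))) = s2 * p/(real p-n)"
        by (rule gg) (use d1 in auto)
      have g3: "s2*n/(M-n) + s2*n/(real p-n) = s2 * p/(real p-n) + (2 * real n - M) / (M - real n) * s2"
      proof -
        have "s2*n/(real p-n) = s2 * p/(real p-n) - s2" using d1 by (simp add: field_simps)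
        moreover have "s2*n/(M-n) = s2 + (2 * real n - M) / (M - real n) * s2" using d1 by (simp add: field_simps)
        ultimately show ?thesis by simp
      qed
      show ?thesis unfolding R0_def N0_def BN VN' BR' VR' M_def[symmetric] distrib_left g1 g2 g3
        by simp
    qed
  next
    assume pn: "p < n"
    have lam: "lam_eff L p = M / p - 1" unfolding L_def M_def m_def
      by (rule lam_I) (use assms(3,5) pn in \<open>auto simp: m_def\<close>)
    have lpos: "M / p - 1 > 0" using Mn np pn by (simp add: field_simps)
    have res: "resolv L (M/p - 1) = mat (p/M)" unfolding L_def
      using lpos np Mn by (subst resolv_I) (auto simp: field_simps)
    have df: "df2 L (M/p-1) = p^2/M" unfolding df2_def res
      using Mn np by (simp add: L_def mat_mul trace_mat m_def[symmetric] M_def[symmetric] power2_eq_square field_simps)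
    have BN: "BN0 L th n p = p * ((p/M)^2 * t) / (n - p^2/M) + p * ((p/M) * t) / (real n - p)"
      using pn by (simp add: Let_def BN0_def lam res df mat_vec inner_th t_def mat_mul power2_eq_square) (simp add: L_def mat_mul mat_vec inner_th t_def power2_eq_square)
    have VN: "VN0 L s2 n p = s2 * p / ((M/p - 1) * (real n - p))"
      using pn by (simp add: VN0_def lam)
    have BR: "BR0 L th n p = n * (M/p-1) * ((p/M) * t) / (real n - p)"
      using pn by (simp add: Let_def BR0_def lam res mat_vec inner_th t_def)
    have VR: "VR0 L s2 n p = s2 * p / (real n - p)"
      using pn by (simp add: VR0_def)
    have pn': "real n - p > 0" using pn by simp
    have Mp: "M - p > 0" using Mn pn by simp
    have "real p * real p < real n * M" by (rule mult_strict_mono) (use pn Mn np in auto)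
    then have nM: "n * M - p^2 > 0" by (simp add: power2_eq_square)
    have d1: "real n - p \<noteq> 0" "M - p \<noteq> 0" "M \<noteq> 0" "real n \<noteq> 0" "real p \<noteq> 0" "n * M - p^2 \<noteq> 0"
      "M - n \<noteq> 0" using pn Mp nM np Mn by auto
    have BN': "BN0 L th n p = (real p)^3*t/(M*(n*M-(real p)^2)) + (real p)^2*t/(M*(real n-p))" unfolding BN using d1
      by (simp add: field_simps power2_eq_square power3_eq_cube)
    have BR': "BR0 L th n p = n*(M-p)*t/(M*(real n-p))" unfolding BR using d1
      by (simp add: field_simps)
    have VN': "VN0 L s2 n p = s2*(real p)^2/((M-p)*(real n-p))" unfolding VN using d1
      by (simp add: field_simps power2_eq_square)
    show "(VR0 L s2 n p)^2 = (real m - real n) / real n * VR0 L s2 n p * VN0 L s2 n p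
                               + real m * s2 / real n * VN0 L s2 n p"
      unfolding VN' VR M_def[symmetric]
      by (rule under_var) (use d1 in auto)
    show "(real m - real n) * BN0 L th n p * (real m * BR0 L th n p - real n * (norm th)^2)
               * (real m * (BR0 L th n p)^2 - real n * (norm th)^4)
            = real n * real m * (BR0 L th n p - (norm th)^2)^2
               * (real m * (BR0 L th n p)^2 + real n * (norm th)^2 * BR0 L th n p
                  - 2 * real n * (norm th)^4)"
      unfolding n4 t_def[symmetric] M_def[symmetric]
      by (rule under_alg[OF _ _ _ BN' BR']) (use pn Mn np in auto)
  qed
qed

end
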